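(* Let $(G,* )$ be a metrizable topological group with no isolated points. Then $G$ has ${\sf S}_c(\mathcal{O}_{\sf nbd},\mathcal{O})$ if and only if $G$ has ${\sf S}_c(\mathcal{O}_{\sf nbd},\Lambda)$.
   Context: For a topological group $(G,* )$ with identity $e$ and a neighborhood $U$ of $e$, $\mathcal{O}(U)=\{x*U:x\in G\}$ and $\mathcal{O}_{\sf nbd}=\{\mathcal{O}(U):U\text{ a neighborhood of }e\}$. $\mathcal{O}$ is the collection of all open covers. An open cover is large if each point is contained in infinitely many elements of the cover; $\Lambda$ denotes the collection of large open covers. A family $\mathcal{B}$ refines $\mathcal{A}$ if every member of $\mathcal{B}$ is contained in some member of $\mathcal{A}$. ${\sf S}_c(\mathcal{A},\mathcal{B})$: for each sequence $(A_n:n<\infty)$ of elements of $\mathcal{A}$ there is a sequence $(B_n:n<\infty)$ such that each $B_n$ is a pairwise disjoint family of open sets refining $A_n$ and $\bigcup_nB_n\in\mathcal{B}$. *)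

theory Defs
  imports "HOL-Analysis.Analysis" "HOL-Algebra.Coset"
begin

definition topological_group :: "('a, 'b) monoid_scheme \<Rightarrow> 'a topology \<Rightarrow> bool" where
  "topological_group G X \<longleftrightarrow>
     group G \<and> topspace X = carrier G \<and>
     continuous_map (prod_topology X X) X (\<lambda>(x, y). x \<otimes>\<^bsub>G\<^esub> y) \<and>
     continuous_map X X (\<lambda>x. inv\<^bsub>G\<^esub> x)"

definition translates_cover :: "('a, 'b) monoid_scheme \<Rightarrow> 'a set \<Rightarrow> 'a set set" where
  "translates_cover G U = (\<lambda>x. x <#\<^bsub>G\<^esub> U) ` carrier G"

definition O_nbd :: "('a, 'b) monoid_scheme \<Rightarrow> 'a topology \<Rightarrow> 'a set set set" where
  "O_nbd G X = {translates_cover G U | U. openin X U \<and> \<one>\<^bsub>G\<^esub> \<in> U}"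

definition open_covers :: "'a topology \<Rightarrow> 'a set set set" where
  "open_covers X = {\<U>. (\<forall>U\<in>\<U>. openin X U) \<and> \<Union>\<U> = topspace X}"

definition large_covers :: "'a topology \<Rightarrow> 'a set set set" where
  "large_covers X = {\<U> \<in> open_covers X. \<forall>x\<in>topspace X. infinite {U \<in> \<U>. x \<in> U}}"

definition S_c :: "'a topology \<Rightarrow> 'a set set set \<Rightarrow> 'a set set set \<Rightarrow> bool" where
  "S_c X \<A> \<B> \<longleftrightarrow>
     (\<forall>A :: nat \<Rightarrow> 'a set set. (\<forall>n. A n \<in> \<A>) \<longrightarrow>
        (\<exists>B :: nat \<Rightarrow> 'a set set.
           (\<forall>n. (\<forall>V\<in>B n. openin X V) \<and> pairwise disjnt (B n) \<and>
                (\<forall>V\<in>B n. \<exists>W\<in>A n. V \<subseteq> W)) \<and>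
           (\<Union>n. B n) \<in> \<B>))"

end

theory Submission
  imports Defs
begin

lemma small_nbhd:
  assumes tg: "topological_group G X" and N: "openin X N" "\<one>\<^bsub>G\<^esub> \<in> N"
  shows "\<exists>W. openin X W \<and> \<one>\<^bsub>G\<^esub> \<in> W \<and>
     (\<forall>w1\<in>W. \<forall>w2\<in>W. inv\<^bsub>G\<^esub> w1 \<otimes>\<^bsub>G\<^esub> w2 \<in> N)"
proof -
  have grp: "group G" and top: "topspace X = carrier G"
    and cm: "continuous_map (prod_topology X X) X (\<lambda>(x, y). x \<otimes>\<^bsub>G\<^esub> y)"
    and ci: "continuous_map X X (\<lambda>x. inv\<^bsub>G\<^esub> x)"
    using tg by (auto simp: topological_group_def)
  have c1: "continuous_map (prod_topology X X) (prod_topology X X) (\<lambda>z. (inv\<^bsub>G\<^esub> (fst z), snd z))"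
    by (intro continuous_map_pairedI continuous_map_compose[OF continuous_map_fst ci, unfolded o_def]
        continuous_map_snd)
  have "continuous_map (prod_topology X X) X ((\<lambda>(x, y). x \<otimes>\<^bsub>G\<^esub> y) \<circ> (\<lambda>z. (inv\<^bsub>G\<^esub> (fst z), snd z)))"
    by (rule continuous_map_compose[OF c1 cm])
  hence cg: "continuous_map (prod_topology X X) X (\<lambda>z. inv\<^bsub>G\<^esub> (fst z) \<otimes>\<^bsub>G\<^esub> snd z)"
    by (simp add: o_def case_prod_beta)
  have op: "openin (prod_topology X X) {z \<in> topspace (prod_topology X X). inv\<^bsub>G\<^esub> (fst z) \<otimes>\<^bsub>G\<^esub> snd z \<in> N}"
    by (rule openin_continuous_map_preimage[OF cg N(1)])
  have one: "\<one>\<^bsub>G\<^esub> \<in> carrier G" using grp by (simp add: group.is_monoid monoid.one_closed)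
  have "(\<one>\<^bsub>G\<^esub>, \<one>\<^bsub>G\<^esub>) \<in> {z \<in> topspace (prod_topology X X). inv\<^bsub>G\<^esub> (fst z) \<otimes>\<^bsub>G\<^esub> snd z \<in> N}"
  proof -
    have m: "monoid G" using grp by (rule group.is_monoid)
    have "inv\<^bsub>G\<^esub> \<one>\<^bsub>G\<^esub> \<otimes>\<^bsub>G\<^esub> \<one>\<^bsub>G\<^esub> = \<one>\<^bsub>G\<^esub>"
      using monoid.inv_one[OF m] monoid.l_one[OF m one] by simp
    thus ?thesis using one top N(2) by simp
  qed
  note ex = op[unfolded openin_prod_topology_alt, rule_format, OF this]
  then obtain U V where UV: "openin X U" "openin X V" "\<one>\<^bsub>G\<^esub> \<in> U" "\<one>\<^bsub>G\<^esub> \<in> V"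
    "U \<times> V \<subseteq> {z \<in> topspace (prod_topology X X). inv\<^bsub>G\<^esub> (fst z) \<otimes>\<^bsub>G\<^esub> snd z \<in> N}"
    by (elim exE conjE) (rule that, assumption+)
  show ?thesis
  proof (intro exI conjI ballI)
    show "openin X (U \<inter> V)" using UV by blast
    show "\<one>\<^bsub>G\<^esub> \<in> U \<inter> V" using UV by blast
    fix w1 w2 assume "w1 \<in> U \<inter> V" "w2 \<in> U \<inter> V"
    hence "(w1, w2) \<in> U \<times> V" by blast
    thus "inv\<^bsub>G\<^esub> w1 \<otimes>\<^bsub>G\<^esub> w2 \<in> N" using UV(5) by fastforce
  qed
qed


lemma (in group) coset_diff:
  assumes "a \<in> carrier G" "w1 \<in> carrier G" "w2 \<in> carrier G"
  shows "inv (a \<otimes> w1) \<otimes> (a \<otimes> w2) = inv w1 \<otimes> w2"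
proof -
  have "inv (a \<otimes> w1) \<otimes> (a \<otimes> w2) = (inv w1 \<otimes> inv a) \<otimes> (a \<otimes> w2)"
    using assms by (simp only: inv_mult_group)
  also have "\<dots> = inv w1 \<otimes> (inv a \<otimes> (a \<otimes> w2))"
    using assms by (simp only: m_assoc inv_closed m_closed)
  also have "inv a \<otimes> (a \<otimes> w2) = (inv a \<otimes> a) \<otimes> w2"
    using assms by (simp only: m_assoc inv_closed)
  also have "\<dots> = w2" using assms by (simp only: l_inv l_one)
  finally show ?thesis .
qed

lemma (in group) inv_mult_one_eq:
  assumes "x \<in> carrier G" "y \<in> carrier G" "inv x \<otimes> y = \<one>"
  shows "y = x"
proof -
  have "x \<otimes> (inv x \<otimes> y) = (x \<otimes> inv x) \<otimes> y" using assms by (simp only: m_assoc inv_closed)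
  also have "\<dots> = y" using assms by (simp only: r_inv l_one)
  finally have "x \<otimes> (inv x \<otimes> y) = y" .
  moreover have "x \<otimes> (inv x \<otimes> y) = x" using assms by (simp only: r_one)
  ultimately show ?thesis by simp
qed

theorem theorem3p6:
  fixes G :: "('a, 'b) monoid_scheme" and X :: "'a topology"
  assumes "topological_group G X"
    and "metrizable_space X"
    and "\<forall>x\<in>topspace X. \<not> openin X {x}"
  shows "S_c X (O_nbd G X) (open_covers X) \<longleftrightarrow> S_c X (O_nbd G X) (large_covers X)"
proof
  assume L: "S_c X (O_nbd G X) (large_covers X)"
  show "S_c X (O_nbd G X) (open_covers X)"
    unfolding S_c_def
  proof (intro allI impI)
    fix A :: "nat \<Rightarrow> 'a set set" assume "\<forall>n. A n \<in> O_nbd G X"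
    from L[unfolded S_c_def, THEN spec, THEN mp, OF this] obtain B where
      B1: "\<forall>n. (\<forall>V\<in>B n. openin X V) \<and> pairwise disjnt (B n) \<and>
                (\<forall>V\<in>B n. \<exists>W\<in>A n. V \<subseteq> W)" and B2: "(\<Union>n. B n) \<in> large_covers X"
      by (elim exE conjE)
    have B3: "(\<Union>n. B n) \<in> open_covers X" using B2 unfolding large_covers_def by simp
    show "\<exists>B. (\<forall>n. (\<forall>V\<in>B n. openin X V) \<and> pairwise disjnt (B n) \<and>
                (\<forall>V\<in>B n. \<exists>W\<in>A n. V \<subseteq> W)) \<and> (\<Union>n. B n) \<in> open_covers X"
      using B1 B3 by (intro exI conjI)
  qed
next
  assume R: "S_c X (O_nbd G X) (open_covers X)"
  have grp: "group G" and top: "topspace X = carrier G"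
    using assms(1) by (auto simp: topological_group_def)
  have one: "\<one>\<^bsub>G\<^esub> \<in> carrier G" using grp by (simp add: group.is_monoid monoid.one_closed)
  obtain M d where ms: "Metric_space M d" and Xm: "X = Metric_space.mtopology M d"
    using assms(2) unfolding metrizable_space_def by blast
  have topM: "topspace X = M" using Metric_space.topspace_mtopology[OF ms] Xm by simp
  define Nk where "Nk k = Metric_space.mball M d \<one>\<^bsub>G\<^esub> (1 / real (Suc k))" for k
  have Nk_open: "openin X (Nk k)" for k
    unfolding Nk_def Xm by (rule Metric_space.openin_mball[OF ms])
  have one_Nk: "\<one>\<^bsub>G\<^esub> \<in> Nk k" for k
  proof -
    have oM: "\<one>\<^bsub>G\<^esub> \<in> M" using one top topM by simp
    have "d \<one>\<^bsub>G\<^esub> \<one>\<^bsub>G\<^esub> = 0" using Metric_space.zero[OF ms oM oM] by simp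
    moreover have "(0::real) < 1 / real (Suc k)" by simp
    ultimately show ?thesis unfolding Nk_def using Metric_space.in_mball[OF ms] oM by simp
  qed
  have "\<forall>k. \<exists>W. openin X W \<and> \<one>\<^bsub>G\<^esub> \<in> W \<and>
     (\<forall>w1\<in>W. \<forall>w2\<in>W. inv\<^bsub>G\<^esub> w1 \<otimes>\<^bsub>G\<^esub> w2 \<in> Nk k)"
    using small_nbhd[OF assms(1) Nk_open one_Nk] by blast
  from choice[OF this] obtain W where W: "\<forall>k. openin X (W k) \<and> \<one>\<^bsub>G\<^esub> \<in> W k \<and>
     (\<forall>w1\<in>W k. \<forall>w2\<in>W k. inv\<^bsub>G\<^esub> w1 \<otimes>\<^bsub>G\<^esub> w2 \<in> Nk k)" by blast
  show "S_c X (O_nbd G X) (large_covers X)"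
    unfolding S_c_def
  proof (intro allI impI)
    fix A :: "nat \<Rightarrow> 'a set set" assume A: "\<forall>n. A n \<in> O_nbd G X"
    have "\<forall>n. \<exists>U. openin X U \<and> \<one>\<^bsub>G\<^esub> \<in> U \<and> A n = translates_cover G U"
      using A unfolding O_nbd_def by blast
    from choice[OF this] obtain U where U: "\<forall>n. openin X (U n) \<and> \<one>\<^bsub>G\<^esub> \<in> U n \<and> A n = translates_cover G (U n)"
      by blast
    define A' where "A' k m = translates_cover G (U (prod_encode (k,m)) \<inter> W k)" for k m
    have A'in: "\<forall>m. A' k m \<in> O_nbd G X" for k
      unfolding A'_def O_nbd_def using U W by blast
    define P where "P k Bs \<longleftrightarrow> (\<forall>m. (\<forall>V\<in>Bs m. openin X V) \<and> pairwise disjnt (Bs m) \<and>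
                (\<forall>V\<in>Bs m. \<exists>Z\<in>A' k m. V \<subseteq> Z)) \<and> (\<Union>m. Bs m) \<in> open_covers X" for k and Bs :: "nat \<Rightarrow> 'a set set"
    have "\<forall>k. \<exists>Bs. P k Bs"
    proof
      fix k
      show "\<exists>Bs. P k Bs"
        using R[unfolded S_c_def, THEN spec, THEN mp, OF A'in[of k]] unfolding P_def by blast
    qed
    from choice[OF this] obtain Bk where Bk: "\<forall>k. P k (Bk k)" by blast
    define B where "B n = (case prod_decode n of (k,m) \<Rightarrow> Bk k m)" for n
    have UB: "(\<Union>n. B n) = (\<Union>k. \<Union>m. Bk k m)"
    proof
      show "(\<Union>n. B n) \<subseteq> (\<Union>k. \<Union>m. Bk k m)"
        unfolding B_def by (auto split: prod.splits)
      show "(\<Union>k. \<Union>m. Bk k m) \<subseteq> (\<Union>n. B n)"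
      proof
        fix V assume "V \<in> (\<Union>k. \<Union>m. Bk k m)"
        then obtain k m where "V \<in> Bk k m" by blast
        hence "V \<in> B (prod_encode (k,m))" unfolding B_def by simp
        thus "V \<in> (\<Union>n. B n)" by blast
      qed
    qed
    have refine: "\<exists>a\<in>carrier G. V \<subseteq> a <#\<^bsub>G\<^esub> (U (prod_encode (k,m)) \<inter> W k)"
      if "V \<in> Bk k m" for V k m
      using Bk that unfolding P_def A'_def translates_cover_def by blast
    have Bk_open: "openin X V" if "V \<in> Bk k m" for V k m
      using Bk that unfolding P_def by blast
    have cov: "(\<Union>m. Bk k m) \<in> open_covers X" for k
      using Bk unfolding P_def by blast
    have key: "inv\<^bsub>G\<^esub> y \<otimes>\<^bsub>G\<^esub> z \<in> Nk k" if kh: "V \<in> Bk k m" "y \<in> V" "z \<in> V" for V k m y z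
    proof -
      obtain a where a: "a \<in> carrier G" "V \<subseteq> a <#\<^bsub>G\<^esub> (U (prod_encode (k,m)) \<inter> W k)"
        using refine[OF kh(1)] by blast
      have Wc: "W k \<subseteq> carrier G" using W top openin_subset by metis
      obtain w1 where w1: "w1 \<in> W k" "y = a \<otimes>\<^bsub>G\<^esub> w1"
        using a kh(2) unfolding l_coset_def by blast
      obtain w2 where w2: "w2 \<in> W k" "z = a \<otimes>\<^bsub>G\<^esub> w2"
        using a kh(3) unfolding l_coset_def by blast
      have "inv\<^bsub>G\<^esub> y \<otimes>\<^bsub>G\<^esub> z = inv\<^bsub>G\<^esub> w1 \<otimes>\<^bsub>G\<^esub> w2"
        using group.coset_diff[OF grp a(1)] w1 w2 Wc by blast
      thus ?thesis using W w1 w2 by simp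
    qed
    show "\<exists>B. (\<forall>n. (\<forall>V\<in>B n. openin X V) \<and> pairwise disjnt (B n) \<and>
                (\<forall>V\<in>B n. \<exists>W\<in>A n. V \<subseteq> W)) \<and> (\<Union>n. B n) \<in> large_covers X"
    proof (rule exI[of _ B], intro conjI allI)
      fix n
      obtain k m where km: "prod_decode n = (k,m)" by (cases "prod_decode n")
      have Bn: "B n = Bk k m" unfolding B_def km by simp
      have ne: "n = prod_encode (k,m)" using prod_decode_inverse[of n] km by simp
      show "\<forall>V\<in>B n. openin X V" unfolding Bn using Bk_open by blast
      show "pairwise disjnt (B n)" unfolding Bn using Bk unfolding P_def by blast
      show "\<forall>V\<in>B n. \<exists>Z\<in>A n. V \<subseteq> Z"
      proof
        fix V assume "V \<in> B n"
        hence VB: "V \<in> Bk k m" using Bn by simp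
        from refine[OF VB] obtain a where a: "a \<in> carrier G" "V \<subseteq> a <#\<^bsub>G\<^esub> (U (prod_encode (k,m)) \<inter> W k)"
          by blast
        note a = a[folded ne]
        have "a <#\<^bsub>G\<^esub> (U n \<inter> W k) \<subseteq> a <#\<^bsub>G\<^esub> U n" unfolding l_coset_def by blast
        moreover have "a <#\<^bsub>G\<^esub> U n \<in> A n" using U a(1) unfolding translates_cover_def by blast
        ultimately show "\<exists>Z\<in>A n. V \<subseteq> Z" using a(2) by blast
      qed
    next
      show "(\<Union>n. B n) \<in> large_covers X"
        unfolding UB large_covers_def
      proof (intro CollectI conjI ballI)
        have c0: "\<Union>(\<Union>m. Bk 0 m) = topspace X" using cov[of 0] unfolding open_covers_def by simp
        have "\<Union>(\<Union>k. \<Union>m. Bk k m) = topspace X"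
        proof
          show "\<Union>(\<Union>k. \<Union>m. Bk k m) \<subseteq> topspace X"
          proof (rule Union_least)
            fix V assume "V \<in> (\<Union>k. \<Union>m. Bk k m)"
            then obtain k m where "V \<in> Bk k m" by blast
            thus "V \<subseteq> topspace X" using Bk_open openin_subset by metis
          qed
          show "topspace X \<subseteq> \<Union>(\<Union>k. \<Union>m. Bk k m)"
          proof
            fix y assume "y \<in> topspace X"
            hence "y \<in> \<Union>(\<Union>m. Bk 0 m)" using c0 by simp
            then obtain m V where "V \<in> Bk 0 m" "y \<in> V" by auto
            thus "y \<in> \<Union>(\<Union>k. \<Union>m. Bk k m)" by auto
          qed
        qed
        moreover have "\<forall>V\<in>(\<Union>k. \<Union>m. Bk k m). openin X V" using Bk_open by blast
        ultimately show "(\<Union>k. \<Union>m. Bk k m) \<in> open_covers X"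
          unfolding open_covers_def by simp
      next
        fix x assume x: "x \<in> topspace X"
        show "infinite {V \<in> (\<Union>k. \<Union>m. Bk k m). x \<in> V}"
        proof
          define S where "S = {V \<in> (\<Union>k. \<Union>m. Bk k m). x \<in> V}"
          assume fin: "finite {V \<in> (\<Union>k. \<Union>m. Bk k m). x \<in> V}"
          hence finS: "finite S" unfolding S_def .
          have "\<forall>V\<in>S. \<exists>k0. \<forall>k\<ge>k0. \<forall>m. V \<notin> Bk k m"
          proof
            fix V assume VS: "V \<in> S"
            then obtain k1 m1 where V1: "V \<in> Bk k1 m1" and xV: "x \<in> V" unfolding S_def by blast
            have Vo: "openin X V" using Bk_open[OF V1] .
            have "V \<noteq> {x}" using assms(3) x Vo by blast
            then obtain y where y: "y \<in> V" "y \<noteq> x" using xV by blast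
            have yc: "y \<in> carrier G" and xc: "x \<in> carrier G"
              using y Vo x top openin_subset by blast+
            define t where "t = inv\<^bsub>G\<^esub> x \<otimes>\<^bsub>G\<^esub> y"
            have tc: "t \<in> carrier G" unfolding t_def using grp xc yc
              by (simp add: group.inv_closed monoid.m_closed group.is_monoid)
            have tn: "t \<noteq> \<one>\<^bsub>G\<^esub>" unfolding t_def using group.inv_mult_one_eq[OF grp xc yc] y by blast
            have pos: "0 < d \<one>\<^bsub>G\<^esub> t"
              using Metric_space.mdist_pos_less[OF ms, of t "\<one>\<^bsub>G\<^esub>"] Metric_space.commute[OF ms]
                tn tc one top topM by auto
            obtain k0 where k0: "inverse (real (Suc k0)) < d \<one>\<^bsub>G\<^esub> t"
              using reals_Archimedean[OF pos] by blast
            show "\<exists>k0. \<forall>k\<ge>k0. \<forall>m. V \<notin> Bk k m"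
            proof (intro exI allI impI)
              fix k m assume kk: "k0 \<le> k"
              show "V \<notin> Bk k m"
              proof
                assume "V \<in> Bk k m"
                hence "t \<in> Nk k" using key xV y unfolding t_def by blast
                hence "d \<one>\<^bsub>G\<^esub> t < 1 / real (Suc k)"
                  unfolding Nk_def using Metric_space.in_mball[OF ms] by blast
                moreover have "1 / real (Suc k) \<le> inverse (real (Suc k0))"
                  using kk by (simp add: divide_inverse frac_le)
                ultimately show False using k0 by linarith
              qed
            qed
          qed
          from bchoice[OF this] obtain kf where kf: "\<forall>V\<in>S. \<forall>k\<ge>kf V. \<forall>m. V \<notin> Bk k m"
            by blast
          define K where "K = (\<Sum>V\<in>S. kf V)"
          have "x \<in> \<Union>(\<Union>m. Bk K m)" using cov[of K] x unfolding open_covers_def by blast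
          then obtain m V where V: "V \<in> Bk K m" "x \<in> V" by blast
          hence VS: "V \<in> S" unfolding S_def by blast
          have "kf V \<le> K" unfolding K_def using member_le_sum[OF VS, of kf] finS by simp
          thus False using kf VS V by blast
        qed
      qed
    qed
  qed
qed

end
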